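(* Let $a,r>0$, $\beta\neq0$ and $\theta\in(\theta_0,\frac\pi2)$ with $\tan\theta_0\ge\frac{|\beta|}{\sqrt2}$. Then there exists $M=M(a,\beta,\theta,r)>0$ such that $$\inf_{\xi'\in\mathbb{R}^{N-1},\ \lambda\in\Sigma_{\theta,r}}|\mathcal{A}_a(\lambda,\xi')|\ge M.$$
   Context: $\Sigma_{\theta,r}=\{z\in\mathbb{C}\setminus\{0\}:|\arg z|<\pi-\theta,|z|>r\}$. For $\lambda\in\Sigma_{\theta,r}$, $\xi'\in\mathbb{R}^{N-1}$: $A=|\xi'|$, $B_a=\sqrt{\lambda+a+|\xi'|^2}$ with positive real part, $z_{1,2}(\lambda)=\frac{2\lambda+a(1+\beta^2/2)\pm\sqrt{a^2(1+\beta^2/2)^2-2\lambda^2\beta^2}}{2(1+\beta^2/2)}$, $L_j=\sqrt{|\xi'|^2+z_j}$ with ${\rm Re}\,L_j>0$, $\eta=\frac{a(1+\beta^2/2)}{\sqrt2|\beta|}$. $\mathcal{A}_a(\lambda,\xi')=B_a^3(L_1+L_2)-A^2B_a^2-A^2L_1L_2$ for $\lambda\neq\eta$, and $\mathcal{A}_a(\eta,\xi')=\lim_{\lambda\to\eta}\mathcal{A}_a(\lambda,\xi')$. *)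

theory Defs
  imports "HOL-Analysis.Analysis"
begin

definition sector :: "real \<Rightarrow> real \<Rightarrow> complex set" where
  "sector \<theta> r = {z. z \<noteq> 0 \<and> \<bar>Arg z\<bar> < pi - \<theta> \<and> cmod z > r}"

text \<open>Principal square root; csqrt has nonnegative real part (positive off the negative real axis).\<close>

definition zeta1 :: "real \<Rightarrow> real \<Rightarrow> complex \<Rightarrow> complex" where
  "zeta1 a \<beta> lam = (2 * lam + of_real (a * (1 + \<beta>^2/2))
      + csqrt (of_real ((a * (1 + \<beta>^2/2))^2) - 2 * lam^2 * of_real (\<beta>^2)))
      / of_real (2 * (1 + \<beta>^2/2))"

definition zeta2 :: "real \<Rightarrow> real \<Rightarrow> complex \<Rightarrow> complex" where
  "zeta2 a \<beta> lam = (2 * lam + of_real (a * (1 + \<beta>^2/2))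
      - csqrt (of_real ((a * (1 + \<beta>^2/2))^2) - 2 * lam^2 * of_real (\<beta>^2)))
      / of_real (2 * (1 + \<beta>^2/2))"

definition eta :: "real \<Rightarrow> real \<Rightarrow> real" where
  "eta a \<beta> = a * (1 + \<beta>^2/2) / (sqrt 2 * \<bar>\<beta>\<bar>)"

definition Aform :: "real \<Rightarrow> real \<Rightarrow> complex \<Rightarrow> real \<Rightarrow> complex" where
  "Aform a \<beta> lam A =
     (let B = csqrt (lam + of_real a + of_real (A^2));
          L1 = csqrt (of_real (A^2) + zeta1 a \<beta> lam);
          L2 = csqrt (of_real (A^2) + zeta2 a \<beta> lam)
      in B^3 * (L1 + L2) - of_real (A^2) * B^2 - of_real (A^2) * L1 * L2)"

definition Aa :: "real \<Rightarrow> real \<Rightarrow> complex \<Rightarrow> real^'n \<Rightarrow> complex" where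
  "Aa a \<beta> lam \<xi> =
     (if lam = complex_of_real (eta a \<beta>)
      then Lim (at lam) (\<lambda>mu. Aform a \<beta> mu (norm \<xi>))
      else Aform a \<beta> lam (norm \<xi>))"

end

theory Submission
  imports Defs
begin


lemma aux_re_nonneg:
  fixes ex ey ux uy :: real
  assumes "ex > \<bar>ey\<bar>" "ux \<ge> 0" "(ex*ux+ey*uy)\<^sup>2 \<ge> (ex*uy - ey*ux)\<^sup>2"
  shows "ex*ux + ey*uy \<ge> 0"
proof (rule ccontr)
  assume R: "\<not> ?thesis"
  have "\<bar>ex*uy - ey*ux\<bar> \<le> \<bar>ex*ux+ey*uy\<bar>" using assms(3) by (simp add: abs_le_square_iff)
  hence h1: "-(ex*ux+ey*uy) - (ex*uy - ey*ux) \<ge> 0" and h2: "-(ex*ux+ey*uy) + (ex*uy - ey*ux) \<ge> 0"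
    using R by linarith+
  have p1: "ex + ey > 0" "ex - ey > 0" using assms(1) by linarith+
  have e1: "(ex+ey)*uy \<le> -(ex-ey)*ux" using h1 by (simp add: algebra_simps)
  have e2: "(ex-ey)*uy \<ge> (ex+ey)*ux" using h2 by (simp add: algebra_simps)
  have "(ex-ey)*ux \<ge> 0" using p1 assms(2) by simp
  hence "-(ex-ey)*ux \<le> 0" by linarith
  hence "(ex+ey)*uy \<le> (ex+ey)*0" using e1 by simp
  hence "uy \<le> 0" using mult_le_cancel_left_pos[of "ex+ey" uy 0] p1 by blast
  moreover have "(ex+ey)*ux \<ge> 0" using p1 assms(2) by simp
  hence "(ex-ey)*0 \<le> (ex-ey)*uy" using e2 by simp
  hence "uy \<ge> 0" using mult_le_cancel_left_pos[of "ex-ey" 0 uy] p1 by blast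
  ultimately have "uy = 0" by simp
  hence "(ex+ey)*ux \<le> (ex+ey)*0" using e2 by simp
  hence "ux \<le> 0" using mult_le_cancel_left_pos[of "ex+ey" ux 0] p1 by blast
  hence "ux = 0" using assms(2) by simp
  thus False using R \<open>uy = 0\<close> by simp
qed

lemma rot_sqrt:
  fixes e p :: complex
  assumes "Re e > \<bar>Im e\<bar>" "Re ((cnj e)^2 * p) \<ge> 0"
  shows "Re (cnj e * csqrt p) \<ge> \<bar>Im (cnj e * csqrt p)\<bar>"
proof -
  define u where "u = csqrt p"
  have ux: "Re u \<ge> 0" unfolding u_def by (rule Re_csqrt)
  have "(cnj e * u)^2 = (cnj e)^2 * p" unfolding u_def by (simp add: power_mult_distrib)
  hence "Re ((cnj e * u)^2) \<ge> 0" using assms(2) by simp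
  hence sq: "(Re (cnj e * u))^2 \<ge> (Im (cnj e * u))^2" by (simp add: power2_eq_square)
  have "Re (cnj e * u) = Re e * Re u + Im e * Im u" by simp
  moreover have "Im (cnj e * u) = Re e * Im u - Im e * Re u" by simp
  ultimately have "Re (cnj e * u) \<ge> 0" using aux_re_nonneg[OF assms(1) ux] sq by simp
  moreover have "\<bar>Im (cnj e * u)\<bar> \<le> \<bar>Re (cnj e * u)\<bar>" using sq abs_le_square_iff by blast
  ultimately show ?thesis unfolding u_def by simp
qed

lemma hp_csqrt:
  fixes g p q :: complex
  assumes "Re g > 0" "Re (cnj g * p) \<ge> 0" "Re (cnj g * q) \<ge> 0"
  shows "Re (csqrt p * cnj (csqrt q)) \<ge> 0"
proof -
  define e where "e = csqrt g"
  have e2: "e^2 = g" unfolding e_def by simp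
  have "Re (e^2) = Re e ^2 - Im e ^2" by (simp add: power2_eq_square)
  hence "Re e ^2 > Im e ^2" using e2 assms(1) by simp
  moreover have "Re e \<ge> 0" unfolding e_def by (rule Re_csqrt)
  ultimately have ee: "Re e > \<bar>Im e\<bar>"
    by (metis abs_le_square_iff abs_of_nonneg not_le)
  have ce: "(cnj e)^2 = cnj g" using e2 by (metis complex_cnj_power)
  have U: "Re (cnj e * csqrt p) \<ge> \<bar>Im (cnj e * csqrt p)\<bar>" using assms(2) by (intro rot_sqrt[OF ee]) (simp add: ce)
  have V: "Re (cnj e * csqrt q) \<ge> \<bar>Im (cnj e * csqrt q)\<bar>" using assms(3) by (intro rot_sqrt[OF ee]) (simp add: ce)
  define u' where "u' = cnj e * csqrt p"
  define v' where "v' = cnj e * csqrt q"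
  have "Re (u' * cnj v') \<ge> 0"
  proof -
    have "Re (u' * cnj v') = Re u' * Re v' + Im u' * Im v'" by simp
    moreover have "Re u' * Re v' \<ge> \<bar>Im u'\<bar> * \<bar>Im v'\<bar>"
      using U V unfolding u'_def[symmetric] v'_def[symmetric] by (intro mult_mono) auto
    moreover have "Im u' * Im v' \<ge> - (\<bar>Im u'\<bar> * \<bar>Im v'\<bar>)"
      using abs_ge_minus_self[of "Im u' * Im v'"] by (simp add: abs_mult)
    ultimately show ?thesis by linarith
  qed
  moreover have "u' * cnj v' = of_real ((cmod e)^2) * (csqrt p * cnj (csqrt q))"
    proof -
    have "u' * cnj v' = (e * cnj e) * (csqrt p * cnj (csqrt q))"
      unfolding u'_def v'_def by (simp del: csqrt.simps)
    thus ?thesis by (simp only: complex_norm_square)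
  qed
  ultimately have "(cmod e)^2 * Re (csqrt p * cnj (csqrt q)) \<ge> 0" by (simp del: csqrt.simps)
  moreover have "cmod e > 0" using ee by auto
  ultimately show ?thesis by (simp add: zero_le_mult_iff)
qed

lemma uhp_csqrt:
  assumes "Im p \<ge> 0" "Im q \<ge> 0"
  shows "Re (csqrt p * cnj (csqrt q)) \<ge> 0"
proof -
  have "Im (csqrt p) \<ge> 0" "Im (csqrt q) \<ge> 0" using assms by (auto simp del: csqrt.simps simp: csqrt.simps(2) complex_Re_le_cmod)
  thus ?thesis using Re_csqrt[of p] Re_csqrt[of q] by simp
qed

lemma lhp_csqrt:
  assumes "Im p < 0" "Im q < 0"
  shows "Re (csqrt p * cnj (csqrt q)) \<ge> 0"
proof -
  have "Im (csqrt p) \<le> 0" "Im (csqrt q) \<le> 0" using assms by (auto simp del: csqrt.simps simp: csqrt.simps(2) complex_Re_le_cmod)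
  thus ?thesis using Re_csqrt[of p] Re_csqrt[of q] by (simp add: mult_nonpos_nonpos)
qed



lemma norm_add_sq: "(cmod (u + v))^2 = (cmod u)^2 + (cmod v)^2 + 2 * Re (u * cnj v)"
  unfolding cmod_power2 by (simp add: power2_eq_square algebra_simps)

lemma norm_diff_sq: "(cmod (u - v))^2 = (cmod u)^2 + (cmod v)^2 - 2 * Re (u * cnj v)"
  unfolding cmod_power2 by (simp add: power2_eq_square algebra_simps)

lemma dist_cone:
  fixes v :: complex and R s co :: real
  assumes s: "s > 0" and co: "co > 0" and sc: "s^2 + co^2 = 1"
    and SC: "\<bar>Im v\<bar> * co + Re v * s \<ge> 0" and R: "R \<ge> 0"
  shows "cmod (v + of_real R) \<ge> R * s"
proof -
  have "s^2 \<le> 1" using sc zero_le_power2[of co] by linarith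
  hence "s^2 \<le> 1^2" by simp
  hence s1: "s \<le> 1" by (rule power2_le_imp_le) simp
  have sq: "(cmod (v + of_real R))^2 = (Re v + R)^2 + (Im v)^2" by (simp add: cmod_power2)
  have "(Re v + R)^2 + (Im v)^2 \<ge> (R* s)^2"
  proof (cases "Re v \<ge> 0")
    case True
    have "R * s \<le> R" using R s1 by (simp add: mult_left_le)
    hence "Re v + R \<ge> R * s" using True by linarith
    moreover have "R * s \<ge> 0" using R s by simp
    ultimately have "(Re v + R)^2 \<ge> (R* s)^2" by (simp add: power_mono)
    thus ?thesis using zero_le_power2[of "Im v"] by linarith
  next
    case False
    have a1: "- Re v * s \<le> \<bar>Im v\<bar> * co" using SC by linarith
    have a0: "0 \<le> - Re v * s" using False s by (simp add: mult_nonpos_nonneg)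
    have "(- Re v * s)^2 \<le> (\<bar>Im v\<bar> * co)^2" using power_mono[OF a1 a0] .
    hence h: "(Im v)^2 * co^2 \<ge> (Re v)^2 * s^2" by (simp add: power_mult_distrib)
    have id: "co^2 * ((Re v + R)^2 + (Im v)^2 - (R* s)^2) =
        (Re v + co^2 * R)^2 + ((Im v)^2 * co^2 - (Re v)^2 * s^2)"
      using sc by algebra
    have "co^2 * ((Re v + R)^2 + (Im v)^2 - (R* s)^2) \<ge> 0" unfolding id using h by simp
    hence "(Re v + R)^2 + (Im v)^2 - (R* s)^2 \<ge> 0" using co by (simp add: zero_le_mult_iff)
    thus ?thesis by simp
  qed
  hence "(cmod (v + of_real R))^2 \<ge> (R* s)^2" using sq by simp
  thus ?thesis by (rule power2_le_imp_le) simp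
qed



lemma zeta_generic:
  fixes N w C :: complex
  assumes "C \<noteq> 0"
  shows "(N + w) / (2*C) + (N - w) / (2*C) = N / C"
    and "(N + w) / (2*C) * ((N - w) / (2*C)) = (N^2 - w^2) / (4*C^2)"
  using assms by (simp_all add: field_simps power2_eq_square)

lemma zeta_forms:
  fixes a \<beta> :: real and lam :: complex
  defines "C \<equiv> complex_of_real (1+\<beta>^2/2)"
  defines "w \<equiv> csqrt ((of_real a * C)^2 - 2 * lam^2 * of_real (\<beta>^2))"
  shows "zeta1 a \<beta> lam = (2*lam + of_real a * C + w) / (2*C)"
    and "zeta2 a \<beta> lam = (2*lam + of_real a * C - w) / (2*C)"
  unfolding zeta1_def zeta2_def C_def w_def by (simp_all del: csqrt.simps)

lemma zeta_sum:
  fixes a \<beta> :: real and lam :: complex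
  defines "C \<equiv> complex_of_real (1+\<beta>^2/2)"
  shows "zeta1 a \<beta> lam + zeta2 a \<beta> lam = (2*lam + of_real a * C) / C"
proof -
  have "(1+\<beta>^2/2) > 0" by (simp add: add_pos_nonneg)
  hence c': "C \<noteq> 0" unfolding C_def by (metis of_real_eq_0_iff less_irrefl)
  show ?thesis unfolding zeta_forms C_def[symmetric] using zeta_generic(1)[OF c'] by blast
qed

lemma zeta_prod:
  fixes a \<beta> :: real and lam :: complex
  defines "C \<equiv> complex_of_real (1+\<beta>^2/2)"
  shows "zeta1 a \<beta> lam * zeta2 a \<beta> lam = lam * (lam + of_real a) / C"
proof -
  have "(1+\<beta>^2/2) > 0" by (simp add: add_pos_nonneg)
  hence c': "C \<noteq> 0" unfolding C_def by (metis of_real_eq_0_iff less_irrefl)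
  define w where "w = csqrt ((of_real a * C)^2 - 2 * lam^2 * of_real (\<beta>^2))"
  have w2: "w^2 = (of_real a * C)^2 - 2 * lam^2 * of_real (\<beta>^2)" unfolding w_def by simp
  have C2: "2 * C = 2 + of_real (\<beta>^2)" unfolding C_def by (simp add: field_simps)
  have num: "(2*lam + of_real a * C)^2 - w^2 = 4 * C * (lam * (lam + of_real a))"
    unfolding w2 using C2 by algebra
  show ?thesis unfolding zeta_forms C_def[symmetric] w_def[symmetric] zeta_generic(2)[OF c'] num
    using c' by (simp add: field_simps power2_eq_square)
qed



lemma re_sq: "(Re v)^2 = ((cmod v)^2 + Re (v^2))/2"
  unfolding cmod_power2 by (simp add: power2_eq_square)
lemma im_sq: "(Im v)^2 = ((cmod v)^2 - Re (v^2))/2"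
  unfolding cmod_power2 by (simp add: power2_eq_square)

lemma W_re: fixes a c b :: real and lam :: complex
  shows "Re ((of_real a * of_real c)^2 - 2 * lam^2 * of_real b) = (a*c)^2 - 2*b*((Re lam)^2 - (Im lam)^2)"
  by (simp add: power2_eq_square algebra_simps)
lemma W_im: fixes a c b :: real and lam :: complex
  shows "Im ((of_real a * of_real c)^2 - 2 * lam^2 * of_real b) = - 4*b*Re lam * Im lam"
  by (simp add: power2_eq_square algebra_simps)

lemma zeta_hp_pos:
  fixes a \<beta> :: real and lam :: complex
  assumes x: "Re lam > 0" and a: "a > 0"
  shows "Re (cnj lam * zeta1 a \<beta> lam) \<ge> 0" "Re (cnj lam * zeta2 a \<beta> lam) \<ge> 0"
proof -
  define c where "c = 1+\<beta>^2/2"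
  have c: "c > 0" unfolding c_def by (simp add: add_pos_nonneg)
  define C where "C = complex_of_real c"
  define W where "W = (of_real a * C)^2 - 2 * lam^2 * of_real (\<beta>^2)"
  define w where "w = csqrt W"
  define N where "N = 2*lam + of_real a * C"
  have z1: "zeta1 a \<beta> lam = (N + w) / (2*C)" unfolding zeta_forms N_def w_def W_def C_def c_def ..
  have z2: "zeta2 a \<beta> lam = (N - w) / (2*C)" unfolding zeta_forms N_def w_def W_def C_def c_def ..
  define n where "n = Re (cnj lam * N)"
  define m where "m = Re (cnj lam * w)"
  have r1: "Re (cnj lam * zeta1 a \<beta> lam) = (n + m) / (2*c)"
    unfolding z1 n_def m_def C_def by (simp add: algebra_simps del: csqrt.simps)
  have r2: "Re (cnj lam * zeta2 a \<beta> lam) = (n - m) / (2*c)"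
    unfolding z2 n_def m_def C_def by (simp add: algebra_simps del: csqrt.simps)
  have n: "n = 2*((Re lam)^2 + (Im lam)^2) + a*c*Re lam"
    unfolding n_def N_def C_def by (simp add: power2_eq_square algebra_simps)
  have n0: "n \<ge> a*c*Re lam" "a*c*Re lam \<ge> 0" using n x a c by auto
  have cw: "(cmod w)^2 = cmod W" unfolding w_def by simp
  have m2: "m^2 = ((cmod lam)^2 * cmod W + Re ((cnj lam)^2 * W))/2"
    unfolding m_def re_sq[of "cnj lam * w"] by (simp add: norm_mult power_mult_distrib cw w_def del: csqrt.simps)
  have cW: "cmod W \<le> (a*c)^2 + 2*\<beta>^2*(cmod lam)^2"
  proof -
    have "cmod W \<le> cmod ((of_real a * C)^2) + cmod (2 * lam^2 * of_real (\<beta>^2))"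
      unfolding W_def by (rule norm_triangle_ineq4)
    also have "\<dots> = (a*c)^2 + 2*\<beta>^2*(cmod lam)^2"
      unfolding C_def by (simp add: norm_mult norm_power abs_mult power_mult_distrib)
    finally show ?thesis .
  qed
  have ReW: "Re ((cnj lam)^2 * W) = (a*c)^2 * ((Re lam)^2 - (Im lam)^2) - 2*\<beta>^2*((Re lam)^2 + (Im lam)^2)^2"
    unfolding W_def C_def by (simp add: power2_eq_square algebra_simps)
  have cl: "(cmod lam)^2 = (Re lam)^2 + (Im lam)^2" by (simp add: cmod_power2)
  have "m^2 \<le> (a*c*Re lam)^2"
  proof -
    have "(cmod lam)^2 * cmod W \<le> (cmod lam)^2 * ((a*c)^2 + 2*\<beta>^2*(cmod lam)^2)"
      using cW by (simp add: mult_left_mono)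
    hence "m^2 \<le> ((cmod lam)^2 * ((a*c)^2 + 2*\<beta>^2*(cmod lam)^2) + Re ((cnj lam)^2 * W))/2"
      unfolding m2 by simp
    also have "\<dots> = (a*c*Re lam)^2" unfolding ReW cl by (simp add: power2_eq_square algebra_simps)
    finally show ?thesis .
  qed
  also have "\<dots> \<le> n^2" using n0 by (simp add: power_mono)
  finally have "\<bar>m\<bar> \<le> \<bar>n\<bar>" using abs_le_square_iff by blast
  hence "n + m \<ge> 0" "n - m \<ge> 0" using n0 by linarith+
  thus "Re (cnj lam * zeta1 a \<beta> lam) \<ge> 0" "Re (cnj lam * zeta2 a \<beta> lam) \<ge> 0"
    unfolding r1 r2 using c by simp_all
qed

lemma zeta_im:
  fixes a \<beta> :: real and lam :: complex
  assumes a: "a > 0" and y: "Im lam \<noteq> 0" and K: "\<beta>^2 * (Re lam)^2 \<le> 2 * (Im lam)^2"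
  shows "Im lam > 0 \<Longrightarrow> Im (zeta1 a \<beta> lam) > 0 \<and> Im (zeta2 a \<beta> lam) > 0"
    and "Im lam < 0 \<Longrightarrow> Im (zeta1 a \<beta> lam) < 0 \<and> Im (zeta2 a \<beta> lam) < 0"
proof -
  define c where "c = 1+\<beta>^2/2"
  have c: "c > 0" unfolding c_def by (simp add: add_pos_nonneg)
  define C where "C = complex_of_real c"
  define W where "W = (of_real a * C)^2 - 2 * lam^2 * of_real (\<beta>^2)"
  define w where "w = csqrt W"
  define N where "N = 2*lam + of_real a * C"
  have z1: "zeta1 a \<beta> lam = (N + w) / (2*C)" unfolding zeta_forms N_def w_def W_def C_def c_def ..
  have z2: "zeta2 a \<beta> lam = (N - w) / (2*C)" unfolding zeta_forms N_def w_def W_def C_def c_def ..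
  define x where "x = Re lam"
  define y where "y = Im lam"
  have i1: "Im (zeta1 a \<beta> lam) = (2*y + Im w) / (2*c)"
    unfolding z1 N_def C_def y_def by (simp del: csqrt.simps)
  have i2: "Im (zeta2 a \<beta> lam) = (2*y - Im w) / (2*c)"
    unfolding z2 N_def C_def y_def by (simp del: csqrt.simps)
  have ReW: "Re W = (a*c)^2 - 2*\<beta>^2*(x^2 - y^2)"
    unfolding W_def C_def x_def y_def using W_re[where b="\<beta>^2"] by simp
  have ImW: "Im W = - 4*\<beta>^2*x*y"
    unfolding W_def C_def x_def y_def using W_im[where b="\<beta>^2"] by simp
  have ww: "(cmod w)^2 = cmod W" "w^2 = W" unfolding w_def by simp_all
  have iw: "(Im w)^2 = (cmod W - Re W)/2"
    using im_sq[of w] unfolding ww .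
  have K': "2*y^2 - \<beta>^2*x^2 \<ge> 0" using K unfolding x_def y_def by simp
  have y2: "y^2 > 0" using y unfolding y_def by simp
  have P: "(a*c)^2 + (2+\<beta>^2)*(2*y^2 - \<beta>^2*x^2) > 0"
    using a c K' by (simp add: add_pos_nonneg)
  have pos: "8*y^2 + Re W > 0"
  proof -
    have "8*y^2 + Re W = (a*c)^2 + 4*y^2 + 2*\<beta>^2*y^2 + 2*(2*y^2 - \<beta>^2*x^2)"
      unfolding ReW by (simp add: algebra_simps)
    moreover have "2*\<beta>^2*y^2 \<ge> 0" by simp
    ultimately show ?thesis using y2 K' a c by (smt (verit) zero_less_power2 mult_pos_pos)
  qed
  have "(cmod W)^2 < (8*y^2 + Re W)^2"
  proof -
    have "(8*y^2 + Re W)^2 - (cmod W)^2 = 16*y^2*((a*c)^2 + (2+\<beta>^2)*(2*y^2 - \<beta>^2*x^2))"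
      unfolding cmod_power2 ReW ImW by (simp add: power2_eq_square algebra_simps)
    moreover have "16*y^2*((a*c)^2 + (2+\<beta>^2)*(2*y^2 - \<beta>^2*x^2)) > 0" using y2 P by simp
    ultimately show ?thesis by linarith
  qed
  hence "cmod W < 8*y^2 + Re W" using pos by (simp add: power_less_imp_less_base)
  hence "(Im w)^2 < (2*y)^2" unfolding iw by (simp add: power2_eq_square)
  hence iwy: "\<bar>Im w\<bar> < \<bar>2*y\<bar>" by (metis abs_le_square_iff not_le)
  show "Im lam > 0 \<Longrightarrow> Im (zeta1 a \<beta> lam) > 0 \<and> Im (zeta2 a \<beta> lam) > 0"
    using iwy c unfolding i1 i2 y_def[symmetric] by (auto simp: divide_pos_pos)
  show "Im lam < 0 \<Longrightarrow> Im (zeta1 a \<beta> lam) < 0 \<and> Im (zeta2 a \<beta> lam) < 0"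
    using iwy c unfolding i1 i2 y_def[symmetric] by (auto simp: divide_neg_pos)
qed



lemma prod_cone:
  fixes lam :: complex and a X s co :: real
  assumes a: "a \<ge> 0" and X: "X \<ge> 0" and s: "s > 0" and co: "co > 0" and sc: "s^2 + co^2 = 1"
    and SC: "\<bar>Im lam\<bar> * co + Re lam * s \<ge> 0"
  shows "2 * (cmod (lam + of_real a) * cmod (lam + of_real (a + X))) \<ge> s * X * cmod lam"
proof -
  have "s^2 \<le> 1" using sc zero_le_power2[of co] by linarith
  hence s1: "s \<le> 1" using power2_le_imp_le[of s 1] by simp
  show ?thesis
  proof (cases "Re lam \<ge> 0")
    case True
    have "(cmod lam)^2 \<le> (cmod (lam + of_real a))^2"
      unfolding cmod_power2 using True a by (simp add: power2_eq_square algebra_simps)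
    hence m1: "cmod lam \<le> cmod (lam + of_real a)" by (rule power2_le_imp_le) simp
    have "X \<le> Re (lam + of_real (a + X))" using True a by simp
    also have "\<dots> \<le> cmod (lam + of_real (a + X))" by (rule complex_Re_le_cmod)
    finally have m2: "X \<le> cmod (lam + of_real (a + X))" .
    have "X * cmod lam \<le> cmod (lam + of_real (a + X)) * cmod (lam + of_real a)"
      using m1 m2 X by (intro mult_mono) auto
    moreover have "s * X * cmod lam \<le> X * cmod lam" using mult_right_mono[OF s1, of "X * cmod lam"] X
      by (simp add: mult.assoc)
    ultimately show ?thesis by (smt (verit) mult.commute norm_ge_zero mult_nonneg_nonneg)
  next
    case False
    have a1: "- Re lam * s \<le> \<bar>Im lam\<bar> * co" using SC by linarith
    have a0: "0 \<le> - Re lam * s" using False s by (simp add: mult_nonpos_nonneg)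
    have "(- Re lam * s)^2 \<le> (\<bar>Im lam\<bar> * co)^2" using power_mono[OF a1 a0] .
    hence h: "(Re lam)^2 * s^2 \<le> (Im lam)^2 * co^2" by (simp add: power_mult_distrib)
    have "(cmod lam * s)^2 = ((Re lam)^2 + (Im lam)^2) * s^2" by (simp add: cmod_power2 power_mult_distrib)
    also have "\<dots> \<le> (Im lam)^2 * co^2 + (Im lam)^2 * s^2" using h by (simp add: algebra_simps)
    also have "\<dots> = (Im lam)^2" proof -
      have "(Im lam)^2 * co^2 + (Im lam)^2 * s^2 = (Im lam)^2 * (s^2 + co^2)" by (simp add: algebra_simps)
      thus ?thesis using sc by simp
    qed
    finally have "(cmod lam * s)^2 \<le> \<bar>Im lam\<bar>^2" by simp
    hence ls: "cmod lam * s \<le> \<bar>Im lam\<bar>" by (rule power2_le_imp_le) simp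
    define p where "p = cmod (lam + of_real a)"
    define q where "q = cmod (lam + of_real (a + X))"
    have p: "p \<ge> \<bar>Im lam\<bar>" unfolding p_def using abs_Im_le_cmod[of "lam + of_real a"] by simp
    have q: "q \<ge> \<bar>Im lam\<bar>" unfolding q_def using abs_Im_le_cmod[of "lam + of_real (a+X)"] by simp
    have pq: "p + q \<ge> X"
    proof -
      have "X = cmod ((lam + of_real (a + X)) - (lam + of_real a))" using X by simp
      also have "\<dots> \<le> q + p" unfolding p_def q_def by (rule norm_triangle_ineq4)
      finally show ?thesis by simp
    qed
    have "2 * (p * q) \<ge> \<bar>Im lam\<bar> * q + \<bar>Im lam\<bar> * p"
      using p q by (smt (verit) abs_ge_zero mult_right_mono mult_left_mono mult.commute)
    also have "\<bar>Im lam\<bar> * q + \<bar>Im lam\<bar> * p = \<bar>Im lam\<bar> * (p + q)" by (simp add: algebra_simps)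
    also have "\<dots> \<ge> \<bar>Im lam\<bar> * X" using pq by (simp add: mult_left_mono)
    also have "\<bar>Im lam\<bar> * X \<ge> cmod lam * s * X" using ls X by (simp add: mult_right_mono)
    finally show ?thesis unfolding p_def q_def by (simp add: mult_ac)
  qed
qed



lemma main_bound:
  fixes a \<beta> s co A :: real and lam :: complex
  assumes a: "a > 0" and s: "s > 0" and co: "co > 0" and sc: "s^2 + co^2 = 1"
    and K: "\<beta>^2 * co^2 < 2 * s^2" and lam0: "lam \<noteq> 0"
    and SC: "\<bar>Im lam\<bar> * co + Re lam * s \<ge> 0"
  shows "cmod (Aform a \<beta> lam A) \<ge> a^2 * s * (s - sqrt (\<beta>^2/(2+\<beta>^2)))"
proof -
  define X where "X = A^2"
  have X: "X \<ge> 0" unfolding X_def by simp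
  define c where "c = 1+\<beta>^2/2"
  have c: "c > 0" unfolding c_def by (simp add: add_pos_nonneg)
  have c1: "c \<ge> 1" unfolding c_def by simp
  define C where "C = complex_of_real c"
  have C0: "C \<noteq> 0" unfolding C_def using c by simp
  define \<kappa> where "\<kappa> = \<beta>^2/(2+\<beta>^2)"
  have \<kappa>0: "\<kappa> \<ge> 0" unfolding \<kappa>_def by (simp add: add_pos_nonneg)
  have \<kappa>c: "\<kappa> = (c - 1)/c" unfolding \<kappa>_def c_def by (simp add: field_simps)
  define z1 where "z1 = zeta1 a \<beta> lam"
  define z2 where "z2 = zeta2 a \<beta> lam"
  define \<mu> where "\<mu> = lam + of_real a"
  define B where "B = csqrt (lam + of_real a + of_real X)"
  define L1 where "L1 = csqrt (of_real X + z1)"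
  define L2 where "L2 = csqrt (of_real X + z2)"
  have AF: "Aform a \<beta> lam A = B^3*(L1+L2) - of_real X * B^2 - of_real X * L1 * L2"
    unfolding Aform_def Let_def B_def L1_def L2_def z1_def z2_def X_def by simp
  have hB: "B^2 = \<mu> + of_real X" unfolding B_def \<mu>_def by simp
  have hL1: "L1^2 = of_real X + z1" unfolding L1_def by simp
  have hL2: "L2^2 = of_real X + z2" unfolding L2_def by simp
  have F4: "Aform a \<beta> lam A = \<mu>*B*(L1+L2) - of_real X*((B-L1)*(B-L2))"
    unfolding AF using hB by algebra
  have vs: "z1 + z2 = (2*lam + of_real a * C)/C"
    unfolding z1_def z2_def C_def c_def by (rule zeta_sum)
  have vp: "z1 * z2 = lam * \<mu> / C"
    unfolding z1_def z2_def C_def c_def \<mu>_def by (rule zeta_prod)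
  have F3: "(B^2 - L1^2)*(B^2 - L2^2) = of_real \<kappa> * \<mu> * lam"
  proof -
    have "(B^2 - L1^2)*(B^2 - L2^2) = (\<mu> - z1)*(\<mu> - z2)" unfolding hB hL1 hL2 by simp
    also have "\<dots> = \<mu>^2 - \<mu>*(z1+z2) + z1*z2" by (simp add: algebra_simps power2_eq_square)
    also have "\<dots> = \<mu> * lam * ((C - 1)/C)" unfolding vs vp using C0
      by (simp add: field_simps power2_eq_square \<mu>_def)
    also have "(C - 1)/C = of_real \<kappa>" unfolding \<kappa>c C_def by simp
    finally show ?thesis by (simp add: mult_ac)
  qed
  have HP: "Re (B * cnj L1) \<ge> 0 \<and> Re (B * cnj L2) \<ge> 0 \<and> Re (L1 * cnj L2) \<ge> 0"
  proof (cases "Re lam > 0")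
    case True
    have g1: "Re (cnj lam * (lam + of_real a + of_real X)) \<ge> 0"
    proof -
      have "Re (cnj lam * (lam + of_real a + of_real X)) = (Re lam)^2 + (Im lam)^2 + (a + X) * Re lam"
        by (simp add: power2_eq_square algebra_simps)
      thus ?thesis using True a X by (simp add: add_nonneg_nonneg)
    qed
    have g2: "Re (cnj lam * (of_real X + z1)) \<ge> 0" "Re (cnj lam * (of_real X + z2)) \<ge> 0"
      using zeta_hp_pos[OF True a, of \<beta>] True X unfolding z1_def z2_def
      by (simp_all add: algebra_simps)
    show ?thesis unfolding B_def L1_def L2_def using g1 g2 hp_csqrt[OF True] by blast
  next
    case False
    have y0: "Im lam \<noteq> 0"
    proof
      assume "Im lam = 0"
      hence "Re lam * s \<ge> 0" using SC by simp
      hence "Re lam \<ge> 0" using s by (simp add: zero_le_mult_iff)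
      hence "Re lam = 0" using False by simp
      thus False using lam0 \<open>Im lam = 0\<close> by (simp add: complex_eq_iff)
    qed
    have a1: "- Re lam * s \<le> \<bar>Im lam\<bar> * co" using SC by linarith
    have a0: "0 \<le> - Re lam * s" using False s by (simp add: mult_nonpos_nonneg)
    have "(- Re lam * s)^2 \<le> (\<bar>Im lam\<bar> * co)^2" using power_mono[OF a1 a0] .
    hence h: "(Re lam)^2 * s^2 \<le> (Im lam)^2 * co^2" by (simp add: power_mult_distrib)
    have "co^2 * (\<beta>^2 * (Re lam)^2) \<le> 2 * ((Im lam)^2 * co^2)"
    proof -
      have "co^2 * (\<beta>^2 * (Re lam)^2) = (\<beta>^2 * co^2) * (Re lam)^2" by (simp add: algebra_simps)
      also have "\<dots> \<le> (2 * s^2) * (Re lam)^2" using K by (intro mult_right_mono) auto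
      also have "\<dots> \<le> 2 * ((Im lam)^2 * co^2)" using h by (simp add: algebra_simps)
      finally show ?thesis .
    qed
    hence "co^2 * (\<beta>^2 * (Re lam)^2) \<le> co^2 * (2 * (Im lam)^2)" by (simp add: algebra_simps)
    hence Kl: "\<beta>^2 * (Re lam)^2 \<le> 2 * (Im lam)^2" using co by simp
    show ?thesis
    proof (cases "Im lam > 0")
      case True
      have "Im z1 > 0" "Im z2 > 0" using zeta_im(1)[OF a y0 Kl True] unfolding z1_def z2_def by auto
      hence "Im (lam + of_real a + of_real X) \<ge> 0" "Im (of_real X + z1) \<ge> 0" "Im (of_real X + z2) \<ge> 0"
        using True by simp_all
      thus ?thesis unfolding B_def L1_def L2_def using uhp_csqrt by blast
    next
      case False
      hence yn: "Im lam < 0" using y0 by simp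
      have "Im z1 < 0" "Im z2 < 0" using zeta_im(2)[OF a y0 Kl yn] unfolding z1_def z2_def by auto
      hence "Im (lam + of_real a + of_real X) < 0" "Im (of_real X + z1) < 0" "Im (of_real X + z2) < 0"
        using yn by simp_all
      thus ?thesis unfolding B_def L1_def L2_def using lhp_csqrt by blast
    qed
  qed
  have HBL1: "Re (B * cnj L1) \<ge> 0" and HBL2: "Re (B * cnj L2) \<ge> 0" and HL12: "Re (L1 * cnj L2) \<ge> 0"
    using HP by auto
  have m1: "cmod (B - L1) \<le> cmod (B + L1)"
  proof -
    have "(cmod (B - L1))^2 \<le> (cmod (B + L1))^2" unfolding norm_add_sq norm_diff_sq using HBL1 by simp
    thus ?thesis by (rule power2_le_imp_le) simp
  qed
  have m2: "cmod (B - L2) \<le> cmod (B + L2)"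
  proof -
    have "(cmod (B - L2))^2 \<le> (cmod (B + L2))^2" unfolding norm_add_sq norm_diff_sq using HBL2 by simp
    thus ?thesis by (rule power2_le_imp_le) simp
  qed
  define D where "D = cmod ((B-L1)*(B-L2))"
  define E where "E = cmod ((B+L1)*(B+L2))"
  have D0: "D \<ge> 0" unfolding D_def by simp
  have DE: "D \<le> E" unfolding D_def E_def norm_mult using m1 m2 by (intro mult_mono) auto
  have DE2: "D * E = \<kappa> * cmod \<mu> * cmod lam"
  proof -
    have "D * E = cmod ((B^2 - L1^2)*(B^2 - L2^2))" unfolding D_def E_def norm_mult[symmetric]
      by (simp add: power2_eq_square algebra_simps)
    also have "\<dots> = \<kappa> * cmod \<mu> * cmod lam" unfolding F3 using \<kappa>0 by (simp add: norm_mult)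
    finally show ?thesis .
  qed
  have D2: "D^2 \<le> \<kappa> * cmod \<mu> * cmod lam"
    unfolding DE2[symmetric] power2_eq_square using DE D0 by (simp add: mult_left_mono)
  have nB: "(cmod B)^2 = cmod (\<mu> + of_real X)" unfolding B_def \<mu>_def by (simp add: add.assoc)
  have nL1: "(cmod L1)^2 = cmod (of_real X + z1)" unfolding L1_def by simp
  have nL2: "(cmod L2)^2 = cmod (of_real X + z2)" unfolding L2_def by simp
  have sc2: "s^2 \<le> 1" using sc zero_le_power2[of co] by linarith
  have SC2: "\<bar>Im (2*lam)\<bar> * co + Re (2*lam) * s \<ge> 0" using SC by simp
  have L12: "(cmod (L1+L2))^2 \<ge> (2*c*X + a*c) * s / c"
  proof -
    define V where "V = 2*lam + of_real (2*c*X + a*c)"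
    have i1: "(cmod (L1+L2))^2 \<ge> (cmod L1)^2 + (cmod L2)^2" unfolding norm_add_sq using HL12 by simp
    have i2: "(cmod L1)^2 + (cmod L2)^2 \<ge> cmod ((of_real X + z1) + (of_real X + z2))"
      unfolding nL1 nL2 by (rule norm_triangle_ineq)
    have i3: "(of_real X + z1) + (of_real X + z2) = V / C"
      using vs C0 unfolding C_def V_def by (simp add: field_simps)
    have i4: "cmod (V / C) = cmod V / c" unfolding C_def using c by (simp add: norm_divide)
    have i5: "cmod V \<ge> (2*c*X + a*c) * s"
      using dist_cone[OF s co sc SC2, of "2*c*X + a*c"] a c X unfolding V_def by simp
    have i6: "(2*c*X + a*c) * s / c \<le> cmod V / c" using divide_right_mono[OF i5, of c] c by simp
    show ?thesis using i1 i2 i3 i4 i6 by simp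
  qed
  have dB: "cmod (\<mu> + of_real X) \<ge> (a + X) * s"
    using dist_cone[OF s co sc SC, of "a + X"] a X unfolding \<mu>_def by (simp add: add.assoc)
  have d\<mu>: "cmod \<mu> \<ge> a * s" using dist_cone[OF s co sc SC, of a] a unfolding \<mu>_def by simp
  have pr: "2 * (cmod \<mu> * cmod (\<mu> + of_real X)) \<ge> s * X * cmod lam"
    using prod_cone[OF _ X s co sc SC, of a] a unfolding \<mu>_def by (simp add: add.assoc)
  define pP where "pP = cmod \<mu> * cmod B * cmod (L1+L2)"
  define qQ where "qQ = X * D"
  have pP0: "pP \<ge> 0" unfolding pP_def by simp
  have qQ0: "qQ \<ge> 0" unfolding qQ_def using X D0 by simp
  have Fb: "cmod (Aform a \<beta> lam A) \<ge> pP - qQ"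
  proof -
    have "cmod (Aform a \<beta> lam A) \<ge> cmod (\<mu>*B*(L1+L2)) - cmod (of_real X*((B-L1)*(B-L2)))"
      unfolding F4 by (rule norm_triangle_ineq2)
    thus ?thesis unfolding pP_def qQ_def D_def using X by (simp add: norm_mult)
  qed
  have pP2: "pP^2 = cmod \<mu> * (cmod \<mu> * cmod (\<mu> + of_real X)) * (cmod (L1+L2))^2"
    unfolding pP_def power_mult_distrib nB by (simp add: power2_eq_square mult_ac)
  have Lx: "(cmod (L1+L2))^2 \<ge> 2 * X * s"
  proof -
    have "(2*c*X + a*c) * s / c \<ge> 2 * X * s" using c a s X by (simp add: field_simps)
    thus ?thesis using L12 by linarith
  qed
  have La: "(cmod (L1+L2))^2 \<ge> a * s"
  proof -
    have "(2*c*X + a*c) * s / c \<ge> a * s" using c a s X by (simp add: field_simps)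
    thus ?thesis using L12 by linarith
  qed
  have Cl1: "pP^2 \<ge> cmod \<mu> * (s * X * cmod lam / 2) * (2 * X * s)"
    unfolding pP2 using pr Lx s X
    by (intro mult_mono) (auto simp: mult_nonneg_nonneg)
  hence Cl1': "pP^2 \<ge> s^2 * X^2 * cmod \<mu> * cmod lam" by (simp add: power2_eq_square mult_ac)
  have Cl2: "pP^2 \<ge> (a* s)^2 * (a* s) * (a* s)"
  proof -
    have e1: "cmod \<mu> * cmod \<mu> \<ge> (a* s) * (a* s)" using d\<mu> a s by (intro mult_mono) auto
    have e2: "cmod (\<mu> + of_real X) \<ge> a * s" proof -
      have "a * s \<le> (a + X) * s" using X s by (simp add: distrib_right)
      thus ?thesis using dB by linarith
    qed
    have "cmod \<mu> * (cmod \<mu> * cmod (\<mu> + of_real X)) = (cmod \<mu> * cmod \<mu>) * cmod (\<mu> + of_real X)"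
      by (simp add: mult_ac)
    also have "\<dots> \<ge> ((a* s) * (a* s)) * (a* s)" using mult_mono[OF e1 e2] a s by simp
    finally have "cmod \<mu> * (cmod \<mu> * cmod (\<mu> + of_real X)) \<ge> (a* s)^2 * (a* s)" by (simp add: power2_eq_square)
    note f = this
    show ?thesis unfolding pP2 using mult_mono[OF f La] a s by simp
  qed
  have pPl: "pP \<ge> (a* s)^2"
  proof -
    have "((a* s)^2)^2 \<le> pP^2" using Cl2 by (simp add: power2_eq_square mult_ac)
    thus ?thesis using pP0 by (rule power2_le_imp_le)
  qed
  have qQ2: "qQ^2 \<le> X^2 * (\<kappa> * cmod \<mu> * cmod lam)"
    unfolding qQ_def power_mult_distrib by (rule mult_left_mono[OF D2]) simp
  have "(s * qQ)^2 \<le> (sqrt \<kappa> * pP)^2"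
  proof -
    have "(s * qQ)^2 = s^2 * qQ^2" by (simp add: power_mult_distrib)
    also have "\<dots> \<le> s^2 * (X^2 * (\<kappa> * cmod \<mu> * cmod lam))" by (rule mult_left_mono[OF qQ2]) simp
    also have "\<dots> = \<kappa> * (s^2 * X^2 * cmod \<mu> * cmod lam)" by (simp add: mult_ac)
    also have "\<dots> \<le> \<kappa> * pP^2" by (rule mult_left_mono[OF Cl1' \<kappa>0])
    also have "\<dots> = (sqrt \<kappa> * pP)^2" using \<kappa>0 by (simp add: power_mult_distrib)
    finally show ?thesis .
  qed
  hence sq: "s * qQ \<le> sqrt \<kappa> * pP" by (rule power2_le_imp_le) (use pP0 \<kappa>0 in auto)
  have "\<kappa> < s^2"
  proof -
    have "co^2 = 1 - s^2" using sc by simp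
    hence "\<beta>^2 * (1 - s^2) < 2 * s^2" using K by simp
    hence "\<beta>^2 < s^2 * (2 + \<beta>^2)" by (simp add: algebra_simps)
    thus ?thesis unfolding \<kappa>_def by (simp add: divide_less_eq add_pos_nonneg)
  qed
  hence "sqrt \<kappa> < sqrt (s^2)" by (rule real_sqrt_less_mono)
  hence sk: "sqrt \<kappa> < s" using s by simp
  have "s * (pP - qQ) \<le> s * cmod (Aform a \<beta> lam A)" by (rule mult_left_mono[OF Fb]) (use s in simp)
  hence "s * cmod (Aform a \<beta> lam A) \<ge> s * pP - s * qQ" by (simp add: right_diff_distrib)
  also have "s * pP - s * qQ \<ge> (s - sqrt \<kappa>) * pP" using sq by (simp add: algebra_simps)
  also have "(s - sqrt \<kappa>) * pP \<ge> (s - sqrt \<kappa>) * (a* s)^2" by (rule mult_left_mono[OF pPl]) (use sk in simp)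
  finally have "s * cmod (Aform a \<beta> lam A) \<ge> s * (a^2 * s * (s - sqrt \<kappa>))"
    by (simp add: power2_eq_square mult_ac)
  hence "cmod (Aform a \<beta> lam A) \<ge> a^2 * s * (s - sqrt \<kappa>)" using s by simp
  thus ?thesis unfolding \<kappa>_def .
qed



lemma isCont_csqrt0: "isCont csqrt 0"
proof -
  have "((\<lambda>x. sqrt (norm x)) \<longlongrightarrow> sqrt (norm (0::complex))) (at (0::complex))"
    by (intro tendsto_intros)
  hence "((\<lambda>x. norm (csqrt x)) \<longlongrightarrow> 0) (at (0::complex))" by simp
  hence "(csqrt \<longlongrightarrow> 0) (at (0::complex))" by (rule tendsto_norm_zero_iff[THEN iffD1])
  thus ?thesis unfolding isCont_def by simp
qed

lemma isCont_csqrt_pos: "Re z > 0 \<Longrightarrow> isCont csqrt z"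
  by (rule continuous_at_csqrt) (simp add: complex_nonpos_Reals_iff)

lemma cont_eta:
  fixes a \<beta> A :: real
  assumes a: "a > 0" and b: "\<beta> \<noteq> 0"
  shows "isCont (\<lambda>mu. Aform a \<beta> mu A) (of_real (eta a \<beta>))"
proof -
  define c where "c = 1 + \<beta>^2/2"
  have c: "c > 0" unfolding c_def by (simp add: add_pos_nonneg)
  define e where "e = eta a \<beta>"
  have e: "e > 0" unfolding e_def eta_def c_def[symmetric] using a c b by simp
  have e2: "2 * e^2 * \<beta>^2 = (a*c)^2"
    unfolding e_def eta_def c_def[symmetric] using b by (simp add: power_divide power_mult_distrib)
  define W where "W = (\<lambda>mu::complex. of_real ((a*c)^2) - 2*mu^2* of_real(\<beta>^2))"
  have We: "W (of_real e) = 0"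
  proof -
    have "W (of_real e) = of_real ((a*c)^2 - 2 * e^2 * \<beta>^2)" unfolding W_def by simp
    thus ?thesis using e2 by simp
  qed
  have cW: "isCont (\<lambda>mu. csqrt (W mu)) (of_real e)"
  proof (rule isCont_o2[where f=W and a="of_real e" and g=csqrt])
    show "isCont W (of_real e)" unfolding W_def by (intro continuous_intros)
    show "isCont csqrt (W (of_real e))" unfolding We by (rule isCont_csqrt0)
  qed
  have z1: "zeta1 a \<beta> = (\<lambda>mu. (2*mu + of_real (a*c) + csqrt (W mu)) / of_real (2*c))"
    unfolding zeta1_def W_def c_def by (rule ext) simp
  have z2: "zeta2 a \<beta> = (\<lambda>mu. (2*mu + of_real (a*c) - csqrt (W mu)) / of_real (2*c))"
    unfolding zeta2_def W_def c_def by (rule ext) simp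
  have cz1: "isCont (zeta1 a \<beta>) (of_real e)" unfolding z1 using cW c by (intro continuous_intros) auto
  have cz2: "isCont (zeta2 a \<beta>) (of_real e)" unfolding z2 using cW c by (intro continuous_intros) auto
  have v1: "zeta1 a \<beta> (of_real e) = of_real ((2*e + a*c)/(2*c))" unfolding z1 We by simp
  have v2: "zeta2 a \<beta> (of_real e) = of_real ((2*e + a*c)/(2*c))" unfolding z2 We by simp
  have pos: "(2*e + a*c)/(2*c) > 0" using e a c by (simp add: add_pos_pos)
  have cL1: "isCont (\<lambda>mu. csqrt (of_real (A^2) + zeta1 a \<beta> mu)) (of_real e)"
    by (rule isCont_o2) (use cz1 in \<open>auto intro!: continuous_intros isCont_csqrt_pos simp: v1 pos add_nonneg_pos\<close>)
  have cL2: "isCont (\<lambda>mu. csqrt (of_real (A^2) + zeta2 a \<beta> mu)) (of_real e)"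
    by (rule isCont_o2) (use cz2 in \<open>auto intro!: continuous_intros isCont_csqrt_pos simp: v2 pos add_nonneg_pos\<close>)
  have cB: "isCont (\<lambda>mu. csqrt (mu + of_real a + of_real (A^2))) (of_real e)"
    by (rule isCont_o2) (use e a in \<open>auto intro!: continuous_intros isCont_csqrt_pos simp: add_pos_nonneg\<close>)
  show ?thesis unfolding Aform_def Let_def e_def[symmetric]
    using cL1 cL2 cB by (intro continuous_intros) auto
qed



lemma sector_SC:
  fixes lam :: complex and \<theta> :: real
  assumes th: "0 < \<theta>" "\<theta> < pi/2" and lam: "lam \<in> sector \<theta> r"
  shows "lam \<noteq> 0" "\<bar>Im lam\<bar> * cos \<theta> + Re lam * sin \<theta> \<ge> 0"
proof -
  show l0: "lam \<noteq> 0" using lam unfolding sector_def by simp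
  define \<phi> where "\<phi> = Arg lam"
  have ph: "\<bar>\<phi>\<bar> < pi - \<theta>" using lam unfolding sector_def \<phi>_def by simp
  have re: "Re lam = cmod lam * cos \<phi>" unfolding \<phi>_def using cos_Arg[OF l0] l0 by simp
  have im: "Im lam = cmod lam * sin \<phi>" unfolding \<phi>_def using sin_Arg[OF l0] l0 by simp
  have ss: "\<bar>sin \<phi>\<bar> = sin \<bar>\<phi>\<bar>"
  proof (cases "\<phi> \<ge> 0")
    case True
    hence "sin \<phi> \<ge> 0" using ph th by (intro sin_ge_zero) auto
    thus ?thesis using True by simp
  next
    case False
    hence "sin (-\<phi>) \<ge> 0" using ph th by (intro sin_ge_zero) auto
    thus ?thesis using False by simp
  qed
  have "sin (\<bar>\<phi>\<bar> + \<theta>) > 0" using ph th by (intro sin_gt_zero) auto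
  hence "\<bar>sin \<phi>\<bar> * cos \<theta> + cos \<phi> * sin \<theta> > 0" unfolding ss by (simp add: sin_add)
  hence "cmod lam * (\<bar>sin \<phi>\<bar> * cos \<theta> + cos \<phi> * sin \<theta>) \<ge> 0" by simp
  thus "\<bar>Im lam\<bar> * cos \<theta> + Re lam * sin \<theta> \<ge> 0" unfolding re im
    by (simp add: abs_mult algebra_simps)
qed

theorem proposition3p5:
  fixes a r \<beta> \<theta> \<theta>0 :: real
  assumes "a > 0" and "r > 0" and "\<beta> \<noteq> 0"
    and "0 \<le> \<theta>0" and "\<theta>0 < \<theta>" and "\<theta> < pi / 2"
    and "tan \<theta>0 \<ge> \<bar>\<beta>\<bar> / sqrt 2"
  shows "\<exists>M > 0. \<forall>(\<xi> :: real^'n) lam. lam \<in> sector \<theta> r \<longrightarrow> cmod (Aa a \<beta> lam \<xi>) \<ge> M"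
proof -
  note a = assms(1)
  have th: "0 < \<theta>" "\<theta> < pi/2" using assms by linarith+
  define s where "s = sin \<theta>"
  define co where "co = cos \<theta>"
  have s: "s > 0" unfolding s_def using th by (intro sin_gt_zero) auto
  have co: "co > 0" unfolding co_def using th by (intro cos_gt_zero) auto
  have sc: "s^2 + co^2 = 1" unfolding s_def co_def by simp
  have "tan \<theta>0 < tan \<theta>" using assms th by (intro tan_monotone) auto
  hence "\<bar>\<beta>\<bar> / sqrt 2 < s / co" using assms(7) unfolding s_def co_def tan_def by linarith
  hence "\<bar>\<beta>\<bar> * co < s * sqrt 2" using co by (simp add: field_simps)
  hence "(\<bar>\<beta>\<bar> * co)^2 < (s * sqrt 2)^2" using co by (intro power_strict_mono) auto
  hence K: "\<beta>^2 * co^2 < 2 * s^2" by (simp add: power_mult_distrib)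
  define \<kappa> where "\<kappa> = \<beta>^2/(2+\<beta>^2)"
  have "\<kappa> < s^2"
  proof -
    have "co^2 = 1 - s^2" using sc by simp
    hence "\<beta>^2 * (1 - s^2) < 2 * s^2" using K by simp
    hence "\<beta>^2 < s^2 * (2 + \<beta>^2)" by (simp add: algebra_simps)
    thus ?thesis unfolding \<kappa>_def by (simp add: divide_less_eq add_pos_nonneg)
  qed
  hence "sqrt \<kappa> < sqrt (s^2)" by (rule real_sqrt_less_mono)
  hence sk: "sqrt \<kappa> < s" using s by simp
  define M where "M = a^2 * s * (s - sqrt \<kappa>)"
  have M: "M > 0" unfolding M_def using a s sk by simp
  have bound: "cmod (Aform a \<beta> lam A) \<ge> M" if "lam \<in> sector \<theta> r" for lam A
  proof -
    have l0: "lam \<noteq> 0" and SC: "\<bar>Im lam\<bar> * co + Re lam * s \<ge> 0"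
      using sector_SC[OF th that] unfolding s_def co_def by auto
    show ?thesis unfolding M_def \<kappa>_def by (rule main_bound[OF a s co sc K l0 SC])
  qed
  have "\<forall>(\<xi> :: real^'n) lam. lam \<in> sector \<theta> r \<longrightarrow> cmod (Aa a \<beta> lam \<xi>) \<ge> M"
  proof (intro allI impI)
    fix \<xi> :: "real^'n" and lam
    assume lam: "lam \<in> sector \<theta> r"
    show "cmod (Aa a \<beta> lam \<xi>) \<ge> M"
    proof (cases "lam = complex_of_real (eta a \<beta>)")
      case True
      have "isCont (\<lambda>mu. Aform a \<beta> mu (norm \<xi>)) lam" unfolding True by (rule cont_eta[OF a assms(3)])
      hence "Lim (at lam) (\<lambda>mu. Aform a \<beta> mu (norm \<xi>)) = Aform a \<beta> lam (norm \<xi>)"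
        unfolding isCont_def by (intro tendsto_Lim) auto
      thus ?thesis unfolding Aa_def using True bound[OF lam] by simp
    next
      case False
      thus ?thesis unfolding Aa_def using bound[OF lam] by simp
    qed
  qed
  thus ?thesis using M by blast
qed


end
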